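(* Let $r>4$, $\Omega=[-r,r]$, and let $K:\mathbb{R}\to[0,\infty)$ be bounded, even, nonincreasing on $(0,\infty)$, with ${\rm supp}(K)=[-2,2]$ and $\int_{\mathbb{R}}K\ge2$. Let $$B_1=\{u\in L^2(\Omega):\ u(x)=1\text{ for }x>1,\ u(x)=-1\text{ for }x<-1,\ u\text{ odd and nondecreasing}\}.$$ Then the map $u\mapsto f(Tu)$ sends $B_1$ into $B_1$.
   Context: $f$ is the saturation function $f(x)=1$ for $x>1$, $f(x)=x$ for $x\in[-1,1]$, $f(x)=-1$ for $x<-1$. For $u\in L^2(\Omega)$, $Tu(x)=\int_{\mathbb{R}}K(x-y)\widetilde u(y)\,dy$ for $x\in\Omega$, where $\widetilde u$ is the extension of $u$ by $0$ outside $\Omega$. *)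

theory Defs
  imports "HOL-Analysis.Analysis"
begin

definition sat :: "real \<Rightarrow> real" where
  "sat x = (if x > 1 then 1 else if x < -1 then -1 else x)"

text \<open>Omega = [-r,r]. Functions on Omega are represented by real functions whose
values outside Omega are irrelevant.\<close>

definition convT :: "(real \<Rightarrow> real) \<Rightarrow> real \<Rightarrow> (real \<Rightarrow> real) \<Rightarrow> real \<Rightarrow> real" where
  "convT K r u x = (LINT y|lborel. K (x - y) * (indicator {-r..r} y * u y))"

definition L2_on :: "real \<Rightarrow> (real \<Rightarrow> real) \<Rightarrow> bool" where
  "L2_on r u \<longleftrightarrow> (\<lambda>x. indicator {-r..r} x * u x) \<in> borel_measurable lborel
     \<and> integrable lborel (\<lambda>x. indicator {-r..r} x * (u x)\<^sup>2)"

definition B1 :: "real \<Rightarrow> (real \<Rightarrow> real) set" where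
  "B1 r = {u. L2_on r u
     \<and> (\<forall>x\<in>{-r..r}. x > 1 \<longrightarrow> u x = 1)
     \<and> (\<forall>x\<in>{-r..r}. x < -1 \<longrightarrow> u x = -1)
     \<and> (\<forall>x\<in>{-r..r}. u (-x) = - u x)
     \<and> mono_on {-r..r} u}"

end

theory Submission imports Defs begin

lemma ind_int_cong:
  fixes K :: "real \<Rightarrow> real"
  assumes [measurable]: "K \<in> borel_measurable lborel" and [measurable]: "S \<in> sets lborel" "T \<in> sets lborel"
    and D: "finite D" "\<And>x. x \<notin> D \<Longrightarrow> (x\<in>S \<longleftrightarrow> x\<in>T)"
  shows "(LINT x|lborel. indicator S x * K x) = (LINT x|lborel. indicator T x * K x)"
proof (rule integral_cong_AE)
  have "AE x in lborel. \<forall>y\<in>D. x \<noteq> y"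
    using D(1) by (intro eventually_ball_finite) (auto intro: AE_lborel_singleton)
  then show "AE x in lborel. indicator S x * K x = indicator T x * K x"
    by eventually_elim (use D(2) in \<open>auto simp: indicator_def\<close>)
qed auto

lemma ind_int_mono:
  fixes K :: "real \<Rightarrow> real"
  assumes "integrable lborel K" "\<And>x. K x \<ge> 0" "S \<in> sets lborel" "T \<in> sets lborel" "S \<subseteq> T"
  shows "(LINT x|lborel. indicator S x * K x) \<le> (LINT x|lborel. indicator T x * K x)"
proof (rule integral_mono)
  show "integrable lborel (\<lambda>x. indicator S x * K x)"
    using integrable_mult_indicator[OF assms(3,1)] by simp
  show "integrable lborel (\<lambda>x. indicator T x * K x)"
    using integrable_mult_indicator[OF assms(4,1)] by simp
  fix x show "indicator S x * K x \<le> indicator T x * K x"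
    using assms(2,5) by (auto simp: indicator_def)
qed

lemma ind_int_reflect:
  fixes K :: "real \<Rightarrow> real"
  assumes "\<And>x. K (-x) = K x"
  shows "(LINT x|lborel. indicator S x * K x) = (LINT x|lborel. indicator S (-x) * K x)"
  using lborel_integral_real_affine[of "-1" "\<lambda>x. indicator S x * K x" 0] assms by simp

lemma ind_int_int:
  fixes K :: "real \<Rightarrow> real"
  assumes "integrable lborel K" "S \<in> sets lborel"
  shows "integrable lborel (\<lambda>x. indicator S x * K x)"
  using integrable_mult_indicator[OF assms(2,1)] by simp

lemma K_facts:
  fixes K :: "real \<Rightarrow> real"
  assumes Kint: "integrable lborel K" and Kpos: "\<And>x. K x \<ge> 0"
    and Kev: "\<And>x. K (-x) = K x" and Kanti: "\<And>a b. 0 < a \<Longrightarrow> a \<le> b \<Longrightarrow> K b \<le> K a"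
    and K0: "\<And>t. \<bar>t\<bar> > 2 \<Longrightarrow> K t = 0" and Kge: "(LINT x|lborel. K x) \<ge> 2"
  shows "(LINT x|lborel. indicator {0<..<2} x * K x) \<ge> 1"
    "(LINT x|lborel. indicator {-2..<0} x * K x) \<ge> 1"
    "(LINT x|lborel. indicator {-1..<1} x * K x) \<ge> 1"
proof -
  have Km[measurable]: "K \<in> borel_measurable lborel" using Kint by (rule borel_measurable_integrable)
  note ii = ind_int_int[OF Kint]
  have r1: "(LINT x|lborel. indicator {-2..<0} x * K x) = (LINT x|lborel. indicator {0<..2} x * K x)"
    by (subst ind_int_reflect[of K, OF Kev]) (auto intro!: Bochner_Integration.integral_cong simp: indicator_def)
  have e1: "(LINT x|lborel. indicator {0<..2} x * K x) = (LINT x|lborel. indicator {0<..<2} x * K x)"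
    by (rule ind_int_cong[where D="{2}"]) auto
  have e2: "(LINT x|lborel. indicator {0..2} x * K x) = (LINT x|lborel. indicator {0<..<2} x * K x)"
    by (rule ind_int_cong[where D="{0,2}"]) auto
  have "(LINT x|lborel. K x) = (LINT x|lborel. indicator {-2..<0} x * K x + indicator {0..2} x * K x)"
  proof (rule Bochner_Integration.integral_cong)
    fix x show "K x = indicator {-2..<0} x * K x + indicator {0..2} x * K x"
      using K0[of x] by (auto simp: indicator_def)
  qed simp
  also have "\<dots> = (LINT x|lborel. indicator {-2..<0} x * K x) + (LINT x|lborel. indicator {0..2} x * K x)"
    by (rule Bochner_Integration.integral_add) (auto intro: ii)
  finally have s: "(LINT x|lborel. K x) = 2 * (LINT x|lborel. indicator {0<..<2} x * K x)"
    using r1 e1 e2 by simp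
  show A: "(LINT x|lborel. indicator {0<..<2} x * K x) \<ge> 1" using s Kge by simp
  show "(LINT x|lborel. indicator {-2..<0} x * K x) \<ge> 1" using A r1 e1 by simp
  define J where "J = (LINT x|lborel. indicator {0<..1} x * K x)"
  have "(LINT x|lborel. indicator {0<..<2} x * K x) = (LINT x|lborel. indicator {0<..1} x * K x + indicator {1<..<2} x * K x)"
    by (rule Bochner_Integration.integral_cong) (auto simp: indicator_def)
  also have "\<dots> = J + (LINT x|lborel. indicator {1<..<2} x * K x)"
    unfolding J_def by (rule Bochner_Integration.integral_add) (auto intro: ii)
  also have "(LINT x|lborel. indicator {1<..<2} x * K x) = (LINT x|lborel. indicator {1<..<2} (1 + x) * K (1 + x))"
    using lborel_integral_real_affine[of 1 "\<lambda>x. indicator {1<..<2} x * K x" 1] by simp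
  also have "\<dots> \<le> J"
    unfolding J_def
  proof (rule integral_mono)
    show "integrable lborel (\<lambda>x. indicator {1<..<2} (1 + x) * K (1 + x))"
      using lborel_integrable_real_affine[OF ii[of "{1<..<2}"], of 1 1] by simp
    fix x show "indicator {1<..<2} (1 + x) * K (1 + x) \<le> indicator {0<..1} x * K x"
      using Kanti[of x "1+x"] Kpos[of x] by (auto simp: indicator_def)
  qed (auto intro: ii)
  finally have J: "J \<ge> 1/2" using A by simp
  have "(LINT x|lborel. indicator {-1..<1} x * K x) = (LINT x|lborel. indicator {-1..<0} x * K x + indicator {0..<1} x * K x)"
    by (rule Bochner_Integration.integral_cong) (auto simp: indicator_def)
  also have "\<dots> = (LINT x|lborel. indicator {-1..<0} x * K x) + (LINT x|lborel. indicator {0..<1} x * K x)"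
    by (rule Bochner_Integration.integral_add) (auto intro: ii)
  also have "(LINT x|lborel. indicator {-1..<0} x * K x) = J"
    unfolding J_def by (subst ind_int_reflect[of K, OF Kev]) (auto intro!: Bochner_Integration.integral_cong simp: indicator_def)
  also have "(LINT x|lborel. indicator {0..<1} x * K x) = J"
    unfolding J_def by (rule ind_int_cong[where D="{0,1}"]) auto
  finally show "(LINT x|lborel. indicator {-1..<1} x * K x) \<ge> 1" using J by simp
qed

lemma sat_props: "sat t \<le> 1" "-1 \<le> sat t" "sat (-t) = - sat t" "1 \<le> t \<Longrightarrow> sat t = 1"
  "a \<le> b \<Longrightarrow> sat a \<le> sat b"
  by (auto simp: sat_def)

theorem mainTheorem10:
  fixes K :: "real \<Rightarrow> real" and r :: real
  assumes "r > 4"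
    and "\<forall>x. K x \<ge> 0"
    and "bounded (range K)"
    and "\<forall>x. K (-x) = K x"
    and "antimono_on {0<..} K"
    and "closure {x. K x \<noteq> 0} = {-2..2}"
    and "(LINT x|lborel. K x) \<ge> 2"
    and "u \<in> B1 r"
  shows "(\<lambda>x. sat (convT K r u x)) \<in> B1 r"
proof -
  have Kint: "integrable lborel K" using assms(7) not_integrable_integral_eq by force
  have Km[measurable]: "K \<in> borel_measurable lborel" using Kint by (rule borel_measurable_integrable)
  have Kpos: "\<And>x. K x \<ge> 0" using assms(2) by auto
  have Kev: "\<And>x. K (-x) = K x" using assms(4) by auto
  have Kanti: "\<And>a b. 0 < a \<Longrightarrow> a \<le> b \<Longrightarrow> K b \<le> K a"
    using assms(5) unfolding monotone_on_def by auto
  have K0: "\<And>t. \<bar>t\<bar> > 2 \<Longrightarrow> K t = 0"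
  proof -
    fix t :: real assume t: "\<bar>t\<bar> > 2"
    show "K t = 0"
    proof (rule ccontr)
      assume "K t \<noteq> 0"
      then have "t \<in> {x. K x \<noteq> 0}" by simp
      then have "t \<in> closure {x. K x \<noteq> 0}" by (rule rev_subsetD[OF _ closure_subset])
      then have "t \<in> {-2..2}" by (simp only: assms(6))
      with t show False by auto
    qed
  qed
  note KF = K_facts[OF Kint Kpos Kev Kanti K0 assms(7)]
  note ii = ind_int_int[OF Kint]
  from assms(8) have uL2: "L2_on r u" and u1: "\<And>x. x\<in>{-r..r} \<Longrightarrow> x > 1 \<Longrightarrow> u x = 1"
    and u2: "\<And>x. x\<in>{-r..r} \<Longrightarrow> x < -1 \<Longrightarrow> u x = -1"
    and uodd: "\<And>x. x\<in>{-r..r} \<Longrightarrow> u (-x) = - u x" and umono: "mono_on {-r..r} u"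
    unfolding B1_def by auto
  define g where "g y = indicator {-r..r} y * u y" for y
  have gm[measurable]: "g \<in> borel_measurable lborel" using uL2 unfolding L2_on_def g_def[abs_def] by auto
  have ubd: "-1 \<le> u y \<and> u y \<le> 1" if "y \<in> {-r..r}" for y
  proof -
    have "u (-r) = -1" using u2[of "-r"] assms(1) by auto
    moreover have "u r = 1" using u1[of r] assms(1) by auto
    moreover have "u (-r) \<le> u y" "u y \<le> u r" using that assms(1)
      by (auto intro!: mono_onD[OF umono])
    ultimately show ?thesis by simp
  qed
  have gbd: "\<bar>g y\<bar> \<le> 1" for y using ubd[of y] by (auto simp: g_def indicator_def)
  have godd: "g (-y) = - g y" for y using uodd[of y] by (auto simp: g_def indicator_def)
  have u00: "u 0 = 0" using uodd[of 0] assms(1) by auto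
  have gpos: "0 \<le> g y" if "0 \<le> y" for y
  proof (cases "y \<le> r")
    case True
    then have "u 0 \<le> u y" using that assms(1) by (auto intro!: mono_onD[OF umono])
    then show ?thesis using True that u00 by (auto simp: g_def indicator_def)
  qed (auto simp: g_def)
  have gone: "g y = 1" if "1 < y" "y \<le> r" for y using u1[of y] that assms(1) by (auto simp: g_def)
  have gu: "g y = u y" if "y \<in> {-r..r}" for y using that by (auto simp: g_def)
  define T where "T x = convT K r u x" for x
  have T2: "T x = (LINT y|lborel. K (x - y) * g y)" for x by (simp add: T_def convT_def g_def)
  have Fint: "integrable lborel (\<lambda>y. K (x - y) * g y)" for x
  proof (rule Bochner_Integration.integrable_bound)
    show "integrable lborel (\<lambda>y. K (x - y))"
      using lborel_integrable_real_affine[OF Kint, of "-1" x] by simp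
    show "AE y in lborel. norm (K (x - y) * g y) \<le> norm (K (x - y))"
      using gbd Kpos by (auto simp: abs_mult intro!: mult_left_le)
  qed measurable
  have Todd: "T (-x) = - T x" for x
  proof -
    have "T (-x) = (LINT y|lborel. K (-x - (0 + -1 * y)) * g (0 + -1 * y))"
      unfolding T2 using lborel_integral_real_affine[of "-1" "\<lambda>y. K (-x - y) * g y" 0] by simp
    also have "\<dots> = (LINT y|lborel. - (K (x - y) * g y))"
      using Kev[of "x - _"] by (auto simp: godd intro!: Bochner_Integration.integral_cong)
    finally show ?thesis by (simp add: T2)
  qed
  have T3: "T x = (LINT s|lborel. K s * g (x - s))" for x
    unfolding T2 using lborel_integral_real_affine[of "-1" "\<lambda>y. K (x - y) * g y" x] by simp
  have Tmono: "T a \<le> T b" if "-1 \<le> a" "a \<le> b" "b \<le> 1" for a b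
    unfolding T3
  proof (rule integral_mono)
    show "integrable lborel (\<lambda>s. K s * g (a - s))" "integrable lborel (\<lambda>s. K s * g (b - s))"
      using lborel_integrable_real_affine[OF Fint[of a], of "-1" a] lborel_integrable_real_affine[OF Fint[of b], of "-1" b]
      by simp_all
    fix s show "K s * g (a - s) \<le> K s * g (b - s)"
    proof (cases "\<bar>s\<bar> > 2")
      case True then show ?thesis using K0 by simp
    next
      case False
      then have "a - s \<in> {-r..r}" "b - s \<in> {-r..r}" using that assms(1) by auto
      then have "g (a - s) \<le> g (b - s)" using gu that by (auto intro!: mono_onD[OF umono])
      then show ?thesis using Kpos[of s] by (intro mult_left_mono) auto
    qed
  qed
  have Tbig: "1 \<le> T x" if x: "1 < x" "x \<le> r" for x
  proof -
    let ?F = "\<lambda>y. K (x - y) * g y"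
    have iF: "integrable lborel (\<lambda>y. indicator S y * ?F y)" if "S \<in> sets lborel" for S
      using integrable_mult_indicator[OF that Fint] by simp
    have iR: "integrable lborel (\<lambda>y. indicator {..<0} (0 + -1 * y) * ?F (0 + -1 * y))"
      using lborel_integrable_real_affine[OF iF[of "{..<0}"], of "-1" 0] by simp
    have "T x = (LINT y|lborel. indicator {0..} y * ?F y + indicator {..<0} y * ?F y)"
      unfolding T2 by (rule Bochner_Integration.integral_cong) (auto simp: indicator_def)
    also have "\<dots> = (LINT y|lborel. indicator {0..} y * ?F y) + (LINT y|lborel. indicator {..<0} y * ?F y)"
      by (rule Bochner_Integration.integral_add) (auto intro: iF)
    also have "(LINT y|lborel. indicator {..<0} y * ?F y) = (LINT y|lborel. indicator {..<0} (0 + -1 * y) * ?F (0 + -1 * y))"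
      using lborel_integral_real_affine[of "-1" "\<lambda>y. indicator {..<0} y * ?F y" 0] by simp
    also have "(LINT y|lborel. indicator {0..} y * ?F y) + \<dots> =
      (LINT y|lborel. indicator {0..} y * ?F y + indicator {..<0} (0 + -1 * y) * ?F (0 + -1 * y))"
      using iF[of "{0..}"] iR by (intro Bochner_Integration.integral_add[symmetric]) auto
    also have "\<dots> \<ge> (LINT y|lborel. indicator {1<..r} y * K (x - y))"
    proof (rule integral_mono)
      show "integrable lborel (\<lambda>y. indicator {1<..r} y * K (x - y))"
        using lborel_integrable_real_affine[OF ii[of "{x-r..<x-1}"], of "-1" x]
        by (simp add: indicator_def conj_commute)
      show "integrable lborel (\<lambda>y. indicator {0..} y * ?F y + indicator {..<0} (0 + -1 * y) * ?F (0 + -1 * y))"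
        using iF[of "{0..}"] iR by (intro Bochner_Integration.integrable_add) auto
      fix y
      show "indicator {1<..r} y * K (x - y) \<le> indicator {0..} y * ?F y + indicator {..<0} (0 + -1 * y) * ?F (0 + -1 * y)"
      proof (cases y "0::real" rule: linorder_cases)
        case less then show ?thesis by (simp add: indicator_def)
      next
        case equal
        have "g 0 = 0" using godd[of 0] by simp
        then show ?thesis using equal by (simp add: indicator_def)
      next
        case greater
        have rhs: "indicator {0..} y * ?F y + indicator {..<0} (0 + -1 * y) * ?F (0 + -1 * y)
            = (K (x - y) - K (x + y)) * g y"
          using greater godd[of y] by (simp add: indicator_def algebra_simps)
        show ?thesis
        proof (cases "1 < y")
          case True
          have "K (x + y) = 0" using K0[of "x+y"] True x by simp
          then show ?thesis unfolding rhs using True gone[of y] Kpos[of "x-y"] gpos[of y] greater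
            by (cases "y \<le> r") (auto simp: indicator_def g_def)
        next
          case False
          have "K (x + y) \<le> K (x - y)"
          proof (cases "x + y > 2")
            case True then show ?thesis using K0[of "x+y"] Kpos by simp
          next
            case False then show ?thesis using Kanti[of "x - y" "x + y"] greater x \<open>\<not> 1 < y\<close> by simp
          qed
          then have "0 \<le> (K (x - y) - K (x + y)) * g y" using gpos[of y] greater by simp
          then show ?thesis unfolding rhs using False by (simp add: indicator_def)
        qed
      qed
    qed
    also have "(LINT y|lborel. indicator {1<..r} y * K (x - y)) = (LINT s|lborel. indicator {1<..r} (x - s) * K s)"
      using lborel_integral_real_affine[of "-1" "\<lambda>y. indicator {1<..r} y * K (x - y)" x]
      by simp
    also have "\<dots> = (LINT s|lborel. indicator {x-r..<x-1} s * K s)"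
      by (rule Bochner_Integration.integral_cong) (auto simp: indicator_def)
    finally have L: "(LINT s|lborel. indicator {x-r..<x-1} s * K s) \<le> T x" .
    consider "x - 1 \<ge> 2" | "r - x \<ge> 2" | "x - 1 < 2" "r - x < 2" by linarith
    then show ?thesis
    proof cases
      case 1
      have "(LINT s|lborel. indicator {0<..<2} s * K s) \<le> (LINT s|lborel. indicator {x-r..<x-1} s * K s)"
        using 1 x by (intro ind_int_mono[OF Kint Kpos]) auto
      then show ?thesis using KF(1) L by linarith
    next
      case 2
      have "(LINT s|lborel. indicator {-2..<0} s * K s) \<le> (LINT s|lborel. indicator {x-r..<x-1} s * K s)"
        using 2 x by (intro ind_int_mono[OF Kint Kpos]) auto
      then show ?thesis using KF(2) L by linarith
    next
      case 3
      have "(LINT s|lborel. indicator {-1..<1} s * K s) \<le> (LINT s|lborel. indicator {x-r..<x-1} s * K s)"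
        using 3 x assms(1) by (intro ind_int_mono[OF Kint Kpos]) auto
      then show ?thesis using KF(3) L by linarith
    qed
  qed
  define h where "h x = sat (T x)" for x
  have h1: "h x = 1" if "1 < x" "x \<le> r" for x using Tbig[OF that] sat_props(4) h_def by simp
  have hodd: "h (-x) = - h x" for x using Todd[of x] sat_props(3) h_def by simp
  have hm1: "h x = -1" if "x < -1" "-r \<le> x" for x using h1[of "-x"] hodd[of "-x"] that by simp
  have hmono: "mono_on {-r..r} h"
  proof (rule mono_onI)
    fix a b assume ab: "a \<in> {-r..r}" "b \<in> {-r..r}" "a \<le> b"
    consider "1 < b" | "a < -1" | "-1 \<le> a" "b \<le> 1" by linarith
    then show "h a \<le> h b"
    proof cases
      case 1 then show ?thesis using h1[of b] ab sat_props(1) h_def by auto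
    next
      case 2 then show ?thesis using hm1[of a] ab sat_props(2) h_def by auto
    next
      case 3 then show ?thesis using Tmono[of a b] ab sat_props(5) h_def by auto
    qed
  qed
  have hm: "(\<lambda>x. indicator {-r..r} x * h x) \<in> borel_measurable lborel"
    using borel_measurable_mono_on_fnc[OF hmono] borel_measurable_restrict_space_iff[of "{-r..r}" borel h]
    by simp
  have "L2_on r h"
    unfolding L2_on_def
  proof
    show "(\<lambda>x. indicator {-r..r} x * h x) \<in> borel_measurable lborel" by (rule hm)
    have eq: "(\<lambda>x. indicator {-r..r} x * (h x)\<^sup>2) = (\<lambda>x. (indicator {-r..r} x * h x)\<^sup>2)"
      by (auto simp: indicator_def fun_eq_iff)
    show "integrable lborel (\<lambda>x. indicator {-r..r} x * (h x)\<^sup>2)"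
      unfolding eq
    proof (rule Bochner_Integration.integrable_bound)
      show "integrable lborel (indicator {-r..r} :: real \<Rightarrow> real)" using assms(1) by (intro integrable_real_indicator) (auto simp: emeasure_lborel_Icc)
      show "(\<lambda>x. (indicator {-r..r} x * h x)\<^sup>2) \<in> borel_measurable lborel" using hm by measurable
      show "AE x in lborel. norm ((indicator {-r..r} x * h x)\<^sup>2) \<le> norm (indicator {-r..r} x :: real)"
      proof (rule AE_I2)
        fix x
        have "\<bar>h x\<bar> \<le> 1" using sat_props(1,2)[of "T x"] by (simp add: h_def abs_le_iff)
        then show "norm ((indicator {-r..r} x * h x)\<^sup>2) \<le> norm (indicator {-r..r} x :: real)"
          by (auto simp: indicator_def abs_square_le_1)
      qed
    qed
  qed
  then have "h \<in> B1 r"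
    unfolding B1_def using h1 hm1 hodd hmono by auto
  then show ?thesis unfolding h_def T_def .
qed

end
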